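(* Let $p\ge 2$, let $\alpha_1,\dots,\alpha_p,c$ be real numbers, and let $B$ be the $p\times p$ symmetric matrix with diagonal entries $\alpha_1,\dots,\alpha_p$ and all off-diagonal entries equal to $c$. For $k=1,\dots,p$ let $d_k(c)$ denote the $k$-th leading principal minor of $B$ (determinant of the upper-left $k\times k$ submatrix). Then $d_k$ is a polynomial in $c$ of degree $k$ given by $$d_k(c)=\prod_{m=1}^k(\alpha_m-c)+c\sum_{m=1}^k\ \prod_{\substack{1\le \ell\le k\\ \ell\ne m}}(\alpha_\ell-c).$$ Assume furthermore that $0<\alpha_1\le\alpha_2\le\dots\le\alpha_p<1$. Then for each $k\in\{2,\dots,p\}$ all roots of $d_k$ are real; denoting them $r_{k,1}\le r_{k,2}\le\dots\le r_{k,k}$ (with multiplicity), they interlace with the $\alpha$'s: $$r_{k,1}<0<\alpha_1\le r_{k,2}\le\alpha_2\le\dots\le r_{k,k}\le\alpha_k<1,$$ and moreover $$-\sqrt{\alpha_1\alpha_2}=r_{2,1}\le r_{3,1}\le\dots\le r_{k,1}<0<r_{k,2}\le\dots\le r_{3,2}\le r_{2,2}=\sqrt{\alpha_1\alpha_2}.$$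
   Context: Since reordering the $\alpha$'s (with the corresponding simultaneous permutation of rows and columns) does not change $\det B=d_p(c)$, the roots $r_{p,1}$, $r_{p,2}$ of $d_p$ are the same for any ordering; the sorted order $\alpha_1\le\dots\le\alpha_p$ is assumed for the statements about the leading minors $d_k$, $k<p$. *)

theory Defs
  imports "Jordan_Normal_Form.Determinant" "HOL-Computational_Algebra.Polynomial"
begin

text \<open>The p x p matrix B with diagonal entries alpha 1, ..., alpha p (1-based indexing of
  alpha) and all off-diagonal entries equal to c.\<close>
definition Bmat :: "nat \<Rightarrow> (nat \<Rightarrow> real) \<Rightarrow> real \<Rightarrow> real mat" where
  "Bmat p alpha c = mat p p (\<lambda>(i, j). if i = j then alpha (i + 1) else c)"

definition lead_sub :: "nat \<Rightarrow> real mat \<Rightarrow> real mat" where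
  "lead_sub k A = mat k k (\<lambda>(i, j). A $$ (i, j))"

definition lead_minor :: "nat \<Rightarrow> real mat \<Rightarrow> real" where
  "lead_minor k A = det (lead_sub k A)"

definition dpoly :: "(nat \<Rightarrow> real) \<Rightarrow> nat \<Rightarrow> real poly" where
  "dpoly alpha k =
     (\<Prod>m\<in>{1..k}. [:alpha m, -1:])
     + [:0, 1:] * (\<Sum>m\<in>{1..k}. \<Prod>l\<in>{1..k} - {m}. [:alpha l, -1:])"

end

theory Submission
  imports Defs
begin


definition Fv :: "'a set \<Rightarrow> ('a \<Rightarrow> real) \<Rightarrow> real \<Rightarrow> real" where
  "Fv S f c = (\<Prod>l\<in>S. f l - c) + c * (\<Sum>m\<in>S. \<Prod>l\<in>S - {m}. f l - c)"

lemma Fv_insert: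
  assumes "finite S" "x \<notin> S"
  shows "Fv (insert x S) f c = (f x - c) * Fv S f c + c * (\<Prod>l\<in>S. f l - c)"
proof -
  have 1: "(\<Prod>l\<in>insert x S - {m}. f l - c) = (f x - c) * (\<Prod>l\<in>S - {m}. f l - c)" if "m \<in> S" for m
  proof -
    have "insert x S - {m} = insert x (S - {m})" using that assms by auto
    thus ?thesis using assms by simp
  qed
  have 2: "insert x S - {x} = S" using assms by auto
  have "(\<Sum>m\<in>insert x S. \<Prod>l\<in>insert x S - {m}. f l - c)
      = (\<Prod>l\<in>S. f l - c) + (\<Sum>m\<in>S. (f x - c) * (\<Prod>l\<in>S - {m}. f l - c))"
    using assms by (simp add: 2 1 cong: sum.cong)
  also have "\<dots> = (\<Prod>l\<in>S. f l - c) + (f x - c) * (\<Sum>m\<in>S. \<Prod>l\<in>S - {m}. f l - c)"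
    by (simp add: sum_distrib_left)
  finally have 3: "(\<Sum>m\<in>insert x S. \<Prod>l\<in>insert x S - {m}. f l - c)
      = (\<Prod>l\<in>S. f l - c) + (f x - c) * (\<Sum>m\<in>S. \<Prod>l\<in>S - {m}. f l - c)" .
  show ?thesis using assms unfolding Fv_def 3
    by (simp add: algebra_simps)
qed

lemma Fv_empty[simp]: "Fv {} f c = 1" by (simp add: Fv_def)

lemma poly_dpoly: "poly (dpoly alpha k) c = Fv {1..k} alpha c"
  unfolding dpoly_def Fv_def by (simp add: poly_prod poly_sum)

lemma Fv_Suc: "Fv {1..Suc k} f c = (f (Suc k) - c) * Fv {1..k} f c + c * (\<Prod>l\<in>{1..k}. f l - c)"
proof -
  have "{1..Suc k} = insert (Suc k) {1..k}" by auto
  thus ?thesis using Fv_insert[of "{1..k}" "Suc k" f c] by simp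
qed

definition Amat :: "nat \<Rightarrow> (nat \<Rightarrow> real) \<Rightarrow> real \<Rightarrow> real mat" where
  "Amat n \<beta> c = mat n n (\<lambda>(i, j). if i = j then \<beta> i else c)"

lemma lead_sub_Bmat: "k \<le> p \<Longrightarrow> lead_sub k (Bmat p alpha c) = Amat k (\<lambda>i. alpha (i + 1)) c"
  unfolding lead_sub_def Bmat_def Amat_def by (rule eq_matI) auto



lemma det_Amat_Suc:
  "det (Amat (Suc n) \<beta> c) = (\<beta> n - c) * det (Amat n \<beta> c) + c * (\<Prod>i<n. \<beta> i - c)"
proof -
  define A where "A = Amat (Suc n) \<beta> c"
  define u where "u = vec (Suc n) (\<lambda>_. c)"
  define v where "v = vec (Suc n) (\<lambda>j. if j = n then \<beta> n - c else 0)"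
  define rr where "rr = (\<lambda>i. row A i)"
  have A: "A \<in> carrier_mat (Suc n) (Suc n)" unfolding A_def Amat_def by auto
  have AA: "A = mat\<^sub>r (Suc n) (Suc n) (\<lambda>i. if i = n then (\<lambda>i. u) i + (\<lambda>i. v) i else rr i)"
    unfolding A_def Amat_def u_def v_def rr_def by (rule eq_matI) auto
  define A1 where "A1 = mat\<^sub>r (Suc n) (Suc n) (\<lambda>i. if i = n then u else rr i)"
  define A2 where "A2 = mat\<^sub>r (Suc n) (Suc n) (\<lambda>i. if i = n then v else rr i)"
  have split: "det A = det A1 + det A2"
    unfolding A1_def A2_def
    apply (subst AA)
    apply (rule det_row_add)
    using A unfolding u_def v_def rr_def by auto
  have A2c: "A2 \<in> carrier_mat (Suc n) (Suc n)" unfolding A2_def by auto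
  have "det A2 = (\<Sum>j<Suc n. A2 $$ (n,j) * cofactor A2 n j)"
    by (rule laplace_expansion_row[OF A2c]) auto
  also have "\<dots> = (\<Sum>j<n. A2 $$ (n,j) * cofactor A2 n j) + A2 $$ (n,n) * cofactor A2 n n"
    by simp
  also have "(\<Sum>j<n. A2 $$ (n,j) * cofactor A2 n j) = 0"
    by (rule sum.neutral) (auto simp: A2_def v_def)
  also have "mat_delete A2 n n = Amat n \<beta> c"
    unfolding A2_def mat_delete_def Amat_def rr_def A_def
    by (rule eq_matI) auto
  hence "cofactor A2 n n = det (Amat n \<beta> c)" unfolding cofactor_def by simp
  finally have d2: "det A2 = (\<beta> n - c) * det (Amat n \<beta> c)" by (simp add: A2_def v_def)
  define U where "U = mat (Suc n) (Suc n) (\<lambda>(i,l). (if l = i \<and> i < n then \<beta> i - c else 0) + (if l = n then c else 0))"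
  define W where "W = mat (Suc n) (Suc n) (\<lambda>(i,j). if i = j then 1 else if i = n then 1 else (0::real))"
  have Uc: "U \<in> carrier_mat (Suc n) (Suc n)" and Wc: "W \<in> carrier_mat (Suc n) (Suc n)"
    unfolding U_def W_def by auto
  have prodUW: "A1 = U * W"
  proof (rule eq_matI)
    fix i j assume ij: "i < dim_row (U * W)" "j < dim_col (U * W)"
    hence i: "i < Suc n" and j: "j < Suc n" using Uc Wc by auto
    have "(U * W) $$ (i, j) = (\<Sum>l\<in>{0..<Suc n}. U $$ (i, l) * W $$ (l, j))"
      using i j Uc Wc by (simp add: scalar_prod_def)
    also have "\<dots> = (\<Sum>l\<in>{0..<Suc n}. (if l = i \<and> i < n then \<beta> i - c else 0) * W $$ (l, j) + (if l = n then c else 0) * W $$ (l, j))"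
      by (rule sum.cong) (auto simp: U_def i algebra_simps)
    also have "\<dots> = (if i < n then (\<beta> i - c) * W $$ (i, j) else 0) + c * W $$ (n, j)"
      by (simp add: sum.distrib if_distrib[of "\<lambda>x. x * _"] i cong: if_cong)
    also have "\<dots> = A1 $$ (i, j)"
      using i j by (auto simp: W_def A1_def u_def rr_def A_def Amat_def)
    finally show "A1 $$ (i, j) = (U * W) $$ (i, j)" by simp
  qed (insert Uc Wc, auto simp: A1_def)
  have dU: "det U = (\<Prod>i<n. \<beta> i - c) * c"
  proof -
    have "det U = prod_list (diag_mat U)"
      by (rule det_upper_triangular[OF _ Uc]) (auto simp: U_def)
    also have "\<dots> = (\<Prod>i=0..<Suc n. U $$ (i,i))" using Uc by (simp add: prod_list_diag_prod)
    also have "\<dots> = (\<Prod>i<n. \<beta> i - c) * c"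
      by (simp add: U_def atLeast0LessThan)
    finally show ?thesis .
  qed
  have dW: "det W = 1"
  proof -
    have "det W = prod_list (diag_mat W)"
      by (rule det_lower_triangular[OF _ Wc]) (auto simp: W_def)
    also have "\<dots> = (\<Prod>i=0..<Suc n. W $$ (i,i))" using Wc by (simp add: prod_list_diag_prod)
    also have "\<dots> = 1" by (simp add: W_def)
    finally show ?thesis .
  qed
  have d1: "det A1 = c * (\<Prod>i<n. \<beta> i - c)"
    unfolding prodUW det_mult[OF Uc Wc] dU dW by simp
  show ?thesis using split d1 d2 unfolding A_def by simp
qed



lemma det_Amat: "det (Amat k (\<lambda>i. alpha (i + 1)) c) = Fv {1..k} alpha c"
proof (induction k)
  case 0
  then show ?case by (simp add: Amat_def)
next
  case (Suc k)
  have "(\<Prod>i<k. alpha (i + 1) - c) = (\<Prod>l\<in>{1..k}. alpha l - c)"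
    by (simp add: prod.atLeast1_atMost_eq)
  then show ?case using Suc Fv_Suc[of k alpha c] by (simp add: det_Amat_Suc)
qed

lemma part1: "k \<le> p \<Longrightarrow> lead_minor k (Bmat p alpha c) = poly (dpoly alpha k) c"
  unfolding lead_minor_def using det_Amat[of k alpha c] by (simp add: lead_sub_Bmat poly_dpoly)

lemma prodlin:
  assumes "finite T"
  shows "degree (\<Prod>l\<in>T. [:f l, -1:]) = card T \<and> coeff (\<Prod>l\<in>T. [:f l, -1:]) (card T) = (-1::real) ^ card T"
  using assms
proof (induction T rule: finite_induct)
  case empty
  then show ?case by simp
next
  case (insert x T)
  define P where "P = (\<Prod>l\<in>T. [:f l, -1:])"
  have P0: "P \<noteq> 0" using insert unfolding P_def by auto
  have l0: "[:f x, -1:] \<noteq> 0" by simp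
  have deg: "degree ([:f x, -1:] * P) = Suc (card T)"
    using degree_mult_eq[OF l0 P0] insert unfolding P_def by simp
  have "coeff ([:f x, -1:] * P) (degree ([:f x, -1:] * P)) = lead_coeff [:f x, -1:] * lead_coeff P"
    by (rule lead_coeff_mult)
  hence "coeff ([:f x, -1:] * P) (Suc (card T)) = - ((-1) ^ card T)"
    using deg insert unfolding P_def by simp
  then show ?case using insert deg unfolding P_def by simp
qed

definition Eform :: "'a set \<Rightarrow> ('a \<Rightarrow> real) \<Rightarrow> ('a \<Rightarrow> real) \<Rightarrow> real poly" where
  "Eform S f w = (\<Prod>a\<in>S. [:f a, -1:]) + [:0, 1:] * (\<Sum>m\<in>S. smult (w m) (\<Prod>l\<in>S - {m}. [:f l, -1:]))"

lemma Eform_deg: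
  assumes "finite S" "card S \<ge> 1"
  shows "degree (Eform S f w) \<le> card S \<and>
    coeff (Eform S f w) (card S) = (-1) ^ card S * (1 - sum w S)"
proof -
  define n where "n = card S"
  define Q where "Q = (\<Sum>m\<in>S. smult (w m) (\<Prod>l\<in>S - {m}. [:f l, -1:]))"
  have cm: "card (S - {m}) = n - 1" if "m \<in> S" for m using that assms n_def by simp
  have dQ: "degree Q \<le> n - 1" unfolding Q_def
    apply (rule degree_sum_le, rule assms)
    using prodlin[of "S - {_}" f] assms cm
    by (metis (no_types, lifting) degree_smult_le dual_order.trans finite_Diff le_refl)
  have cQ: "coeff Q (n - 1) = (\<Sum>m\<in>S. w m) * (-1) ^ (n - 1)"
    unfolding Q_def coeff_sum sum_distrib_right
  proof (rule sum.cong, simp)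
    fix m assume m: "m \<in> S"
    have "coeff (\<Prod>l\<in>S - {m}. [:f l, -1:]) (n - 1) = (-1) ^ (n - 1)"
      using prodlin[of "S - {m}" f] assms cm[OF m] by simp
    thus "coeff (smult (w m) (\<Prod>l\<in>S - {m}. [:f l, - 1:])) (n - 1) = w m * (- 1) ^ (n - 1)"
      by simp
  qed
  have x: "[:0, 1:] * Q = pCons 0 Q" by simp
  have d1: "degree (\<Prod>a\<in>S. [:f a, -1:]) = n" and c1: "coeff (\<Prod>a\<in>S. [:f a, -1:]) n = (-1)^n"
    using prodlin[OF assms(1), of f] n_def by auto
  have d2: "degree (pCons 0 Q) \<le> n"
    using dQ assms n_def by (cases "Q = 0") auto
  have c2: "coeff (pCons 0 Q) n = coeff Q (n - 1)"
    using assms unfolding n_def by (cases "card S") (auto simp: coeff_pCons)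
  have "degree (Eform S f w) \<le> n"
    unfolding Eform_def Q_def[symmetric] x
    by (rule order.trans[OF degree_add_le_max]) (use d1 d2 in auto)
  moreover have "coeff (Eform S f w) n = (-1)^n + (\<Sum>m\<in>S. w m) * (-1) ^ (n - 1)"
    unfolding Eform_def Q_def[symmetric] x using cQ by (simp add: c1 c2)
  moreover have "(-1::real)^n + (\<Sum>m\<in>S. w m) * (-1) ^ (n - 1) = (-1) ^ n * (1 - sum w S)"
    using assms unfolding n_def by (cases "card S") (auto simp: algebra_simps)
  ultimately show ?thesis using n_def by simp
qed

lemma Eform_degree_eq:
  assumes "finite S" "card S \<ge> 1" "sum w S \<noteq> 1"
  shows "degree (Eform S f w) = card S"
proof -
  have "coeff (Eform S f w) (card S) \<noteq> 0"
    using Eform_deg[OF assms(1,2), of f w] assms(3) by simp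
  hence "card S \<le> degree (Eform S f w)" by (rule le_degree)
  thus ?thesis using Eform_deg[OF assms(1,2), of f w] by simp
qed

lemma dpoly_Eform: "dpoly alpha k = Eform {1..k} alpha (\<lambda>_. 1)"
  unfolding dpoly_def Eform_def by simp

lemma part2: "k \<ge> 2 \<Longrightarrow> degree (dpoly alpha k) = k"
  unfolding dpoly_Eform by (subst Eform_degree_eq) auto

lemma poly_Eform: "poly (Eform S f w) c = (\<Prod>l\<in>S. f l - c) + c * (\<Sum>m\<in>S. w m * (\<Prod>l\<in>S - {m}. f l - c))"
  unfolding Eform_def by (simp add: poly_prod poly_sum)



lemma monlin:
  assumes "finite Z"
  shows "degree (\<Prod>z\<in>Z. [:- z, 1::real:]) = card Z \<and> lead_coeff (\<Prod>z\<in>Z. [:- z, 1::real:]) = 1"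
  using assms
proof (induction Z rule: finite_induct)
  case empty
  then show ?case by simp
next
  case (insert x Z)
  define P where "P = (\<Prod>z\<in>Z. [:- z, 1::real:])"
  have P0: "P \<noteq> 0" using insert unfolding P_def by auto
  have l0: "[:- x, 1::real:] \<noteq> 0" by simp
  have deg: "degree ([:-x, 1:] * P) = Suc (card Z)"
    using degree_mult_eq[OF l0 P0] insert unfolding P_def by simp
  have lc: "lead_coeff ([:-x, 1:] * P) = lead_coeff [:-x, 1:] * lead_coeff P" by (rule lead_coeff_mult)
  have lP: "lead_coeff P = 1" using insert.IH unfolding P_def by blast
  have "lead_coeff ([:-x, 1:] * P) = 1" by (simp only: lc lP) simp
  then show ?case using insert deg unfolding P_def by simp
qed

lemma prod_roots_dvd:
  fixes p :: "real poly"
  assumes "finite Z" "\<forall>z\<in>Z. poly p z = 0"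
  shows "(\<Prod>z\<in>Z. [:- z, 1:]) dvd p"
  using assms
proof (induction Z arbitrary: p rule: finite_induct)
  case empty
  then show ?case by simp
next
  case (insert x Z)
  have "[:- x, 1:] dvd p" using insert(4) poly_eq_0_iff_dvd by auto
  then obtain q where q: "p = [:- x, 1:] * q" by (elim dvdE)
  have "\<forall>z\<in>Z. poly q z = 0"
  proof
    fix z assume z: "z \<in> Z"
    have "poly p z = 0" using insert(4) z by auto
    moreover have "poly p z = (z - x) * poly q z" unfolding q poly_mult by simp
    ultimately have "(z - x) * poly q z = 0" by simp
    moreover have "z \<noteq> x" using z insert(2) by auto
    ultimately show "poly q z = 0" by simp
  qed
  hence "(\<Prod>z\<in>Z. [:- z, 1:]) dvd q" by (rule insert.IH)
  hence "[:- x, 1:] * (\<Prod>z\<in>Z. [:- z, 1:]) dvd p" unfolding q by (intro mult_dvd_mono dvd_refl)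
  then show ?case using insert by simp
qed

lemma split_roots:
  fixes p :: "real poly"
  assumes "p \<noteq> 0" "finite Z" "\<forall>z\<in>Z. poly p z = 0" "card Z = degree p"
  shows "p = smult (lead_coeff p) (\<Prod>z\<in>Z. [:- z, 1:])"
proof -
  define P where "P = (\<Prod>z\<in>Z. [:- z, 1::real:])"
  obtain h where h: "p = P * h" using prod_roots_dvd[OF assms(2,3)] unfolding P_def by (elim dvdE)
  have P0: "P \<noteq> 0" and h0: "h \<noteq> 0" using h assms(1) by auto
  have "degree p = degree P + degree h" using h degree_mult_eq[OF P0 h0] by simp
  moreover have dP: "degree P = card Z" and lP: "lead_coeff P = 1" using monlin[OF assms(2)] P_def by auto
  ultimately have "degree h = 0" using assms(4) by simp
  then obtain h0 where hh: "h = [:h0:]" by (metis degree_eq_zeroE)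
  have "p = smult h0 P" using h hh by simp
  moreover have "lead_coeff p = lead_coeff P * lead_coeff [:h0:]" unfolding h hh by (rule lead_coeff_mult)
  hence "lead_coeff p = h0" using lP by simp
  ultimately have "p = smult (lead_coeff p) P" using lP by simp
  thus ?thesis unfolding P_def .
qed

lemma sorted_filter_ge:
  fixes xs :: "real list"
  assumes "sorted xs" "i < length xs" "length (filter P xs) \<ge> Suc i"
    and down: "\<And>x y. x \<le> y \<Longrightarrow> P y \<Longrightarrow> P x"
  shows "P (xs ! i)"
proof (rule ccontr)
  assume np: "\<not> P (xs ! i)"
  have "\<forall>x\<in>set (drop i xs). \<not> P x"
  proof
    fix x assume "x \<in> set (drop i xs)"
    then obtain j where j: "j < length (drop i xs)" "x = drop i xs ! j" by (metis in_set_conv_nth)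
    hence "x = xs ! (i + j)" "i + j < length xs" by auto
    hence "xs ! i \<le> x" using assms(1) by (simp add: sorted_nth_mono)
    thus "\<not> P x" using np down by blast
  qed
  hence "filter P (drop i xs) = []" by (simp add: filter_empty_conv)
  hence "filter P xs = filter P (take i xs)"
    by (metis append_Nil2 append_take_drop_id filter_append)
  hence "length (filter P xs) \<le> i"
    by (metis length_filter_le length_take min.bounded_iff order_refl)
  thus False using assms(3) by simp
qed

lemma sorted_filter_le:
  fixes xs :: "real list"
  assumes "sorted xs" "i < length xs" "length (filter P xs) \<le> i"
    and down: "\<And>x y. x \<le> y \<Longrightarrow> P y \<Longrightarrow> P x"
  shows "\<not> P (xs ! i)"
proof
  assume p: "P (xs ! i)"
  have "\<forall>x\<in>set (take (Suc i) xs). P x"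
  proof
    fix x assume "x \<in> set (take (Suc i) xs)"
    then obtain j where j: "j < length (take (Suc i) xs)" "x = take (Suc i) xs ! j" by (metis in_set_conv_nth)
    hence "x = xs ! j" "j \<le> i" by auto
    hence "x \<le> xs ! i" using assms(1,2) by (simp add: sorted_nth_mono)
    thus "P x" using p down by blast
  qed
  hence "filter P (take (Suc i) xs) = take (Suc i) xs" by simp
  hence "length (filter P (take (Suc i) xs)) = Suc i" using assms(2) by simp
  moreover have "length (filter P (take (Suc i) xs)) \<le> length (filter P xs)"
    by (metis append_take_drop_id filter_append length_append le_add1)
  ultimately show False using assms(3) by simp
qed

lemma rep_sum_lemmas:
  fixes n :: "real \<Rightarrow> nat"
  assumes "finite V"
  shows "size (filter_mset P (\<Sum>a\<in>V. replicate_mset (n a) a)) = (\<Sum>a\<in>{a\<in>V. P a}. n a)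
    \<and> prod_mset (image_mset f (\<Sum>a\<in>V. replicate_mset (n a) a)) = (\<Prod>a\<in>V. f a ^ n a)"
  using assms
proof (induction V rule: finite_induct)
  case empty
  then show ?case by simp
next
  case (insert x V)
  have e: "{a \<in> insert x V. P a} = (if P x then insert x {a\<in>V. P a} else {a\<in>V. P a})" by auto
  have r: "filter_mset P (replicate_mset m x) = (if P x then replicate_mset m x else {#})" for m
    by (induct m) auto
  have s1: "size (filter_mset P (\<Sum>a\<in>insert x V. replicate_mset (n a) a)) =
     (if P x then n x else 0) + size (filter_mset P (\<Sum>a\<in>V. replicate_mset (n a) a))"
    using insert by (simp add: r)
  have s2: "(\<Sum>a\<in>{a\<in>insert x V. P a}. n a) = (if P x then n x else 0) + (\<Sum>a\<in>{a\<in>V. P a}. n a)"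
  proof (cases "P x")
    case True
    hence "{a\<in>insert x V. P a} = insert x {a\<in>V. P a}" by auto
    then show ?thesis using True insert by simp
  next
    case False
    hence "{a\<in>insert x V. P a} = {a\<in>V. P a}" by auto
    then show ?thesis using False by simp
  qed
  show ?case using insert s1 s2 by simp
qed

lemma map_poly_of_real_mult:
  "map_poly complex_of_real (p * q) = map_poly of_real p * map_poly of_real q"
  by (rule poly_eqI) (simp add: coeff_map_poly coeff_mult of_real_sum)

lemma map_poly_of_real_prod:
  "map_poly complex_of_real (\<Prod>j\<in>J. [:- r j, 1:]) = (\<Prod>j\<in>J. [:- of_real (r j), 1:])"
proof (induction J rule: infinite_finite_induct)
  case (infinite A) then show ?case by simp
next
  case empty then show ?case by simp
next
  case (insert x F)
  have 1: "map_poly complex_of_real (\<Prod>j\<in>insert x F. [:- r j, 1:]) = map_poly of_real [:- r x, 1:] * map_poly of_real (\<Prod>j\<in>F. [:- r j, 1:])"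
    unfolding prod.insert[OF insert(1,2)] by (rule map_poly_of_real_mult)
  have 2: "map_poly complex_of_real [:- r x, 1:] = [:- of_real (r x), 1:]" by (simp add: map_poly_pCons)
  show ?case unfolding 1 2 insert.IH by (rule prod.insert[OF insert(1,2), symmetric])
qed

lemma fact_consequences:
  fixes d :: "real poly" and r :: "nat \<Rightarrow> real"
  assumes d: "d = smult (lead_coeff d) (\<Prod>j\<in>{1..k}. [:- r j, 1:])" and d0: "d \<noteq> 0"
  shows "(\<forall>x. poly d x = 0 \<longleftrightarrow> (\<exists>j\<in>{1..k}. x = r j))
    \<and> (\<forall>z. poly (map_poly complex_of_real d) z = 0 \<longrightarrow> z \<in> \<real>)"
proof -
  have L: "lead_coeff d \<noteq> 0" using d0 by simp
  have "poly d x = lead_coeff d * (\<Prod>j\<in>{1..k}. x - r j)" for x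
    by (subst d) (simp add: poly_prod)
  hence "poly d x = 0 \<longleftrightarrow> (\<Prod>j\<in>{1..k}. x - r j) = 0" for x using L by simp
  moreover have "(\<Prod>j\<in>{1..k}. x - r j) = 0 \<longleftrightarrow> (\<exists>j\<in>{1..k}. x - r j = 0)" for x
    by (rule prod_zero_iff) simp
  ultimately have 1: "\<forall>x. poly d x = 0 \<longleftrightarrow> (\<exists>j\<in>{1..k}. x = r j)" by simp
  have "map_poly complex_of_real d = smult (of_real (lead_coeff d)) (\<Prod>j\<in>{1..k}. [:- of_real (r j), 1:])"
    by (subst d) (simp add: map_poly_smult map_poly_of_real_prod)
  hence "poly (map_poly complex_of_real d) z = of_real (lead_coeff d) * (\<Prod>j\<in>{1..k}. z - of_real (r j))" for z
    by (simp add: poly_prod)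
  hence "poly (map_poly complex_of_real d) z = 0 \<longleftrightarrow> (\<Prod>j\<in>{1..k}. z - of_real (r j)) = 0" for z using L by simp
  moreover have "(\<Prod>j\<in>{1..k}. z - of_real (r j)) = 0 \<longleftrightarrow> (\<exists>j\<in>{1..k}. z - of_real (r j) = 0)" for z :: complex
    by (rule prod_zero_iff) simp
  ultimately have "\<forall>z. poly (map_poly complex_of_real d) z = 0 \<longrightarrow> z \<in> \<real>" by auto
  with 1 show ?thesis by blast
qed



lemma of_nat_mult_poly: "of_nat n * (p :: real poly) = smult (of_nat n) p"
  by (induct n) (simp_all add: algebra_simps smult_add_left)

lemma neg_one_sq: "(-1::real) ^ n * (-1) ^ n = 1"
  by (induct n) auto

lemma roots_struct:
  fixes alpha :: "nat \<Rightarrow> real" and k :: nat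
  assumes k2: "k \<ge> 2" and a1: "0 < alpha 1"
    and mono: "\<forall>i j. 1 \<le> i \<longrightarrow> i \<le> j \<longrightarrow> j \<le> k \<longrightarrow> alpha i \<le> alpha j"
  shows "\<exists>r. dpoly alpha k = smult (lead_coeff (dpoly alpha k)) (\<Prod>j\<in>{1..k}. [:- r j, 1:])
     \<and> (\<forall>i j. 1 \<le> i \<longrightarrow> i \<le> j \<longrightarrow> j \<le> k \<longrightarrow> r i \<le> r j)
     \<and> r 1 < 0 \<and> (\<forall>j\<in>{2..k}. alpha (j - 1) \<le> r j \<and> r j \<le> alpha j)"
proof -
  define I where "I = {1..k}"
  define V where "V = alpha ` I"
  define mu where "mu = (\<lambda>a. card {l\<in>I. alpha l = a})"
  define s where "s = card V"
  define e where "e = Eform V id (\<lambda>a. real (mu a))"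
  define g where "g = (\<Prod>a\<in>V. [:a, -1:] ^ (mu a - 1))"
  define d where "d = dpoly alpha k"
  have fI: "finite I" and fV: "finite V" unfolding I_def V_def by auto
  have oneI: "1 \<in> I" using k2 unfolding I_def by auto
  have Vne: "V \<noteq> {}" using oneI unfolding V_def by auto
  have s1: "s \<ge> 1" using fV Vne unfolding s_def by (simp add: Suc_le_eq card_gt_0_iff)
  have Vpos: "0 < a" if aV: "a \<in> V" for a
  proof -
    obtain l where l: "l \<in> I" "a = alpha l" using aV unfolding V_def by auto
    have "alpha 1 \<le> alpha l" using mono l unfolding I_def by auto
    thus ?thesis using a1 l by simp
  qed
  have mu1: "mu a \<ge> 1" if aV: "a \<in> V" for a
  proof -
    obtain l where l: "l \<in> I" "a = alpha l" using aV unfolding V_def by auto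
    have "l \<in> {l\<in>I. alpha l = a}" using l by simp
    hence "card {l\<in>I. alpha l = a} > 0" using fI by (auto simp: card_gt_0_iff)
    thus ?thesis unfolding mu_def by simp
  qed
  have musum: "(\<Sum>a\<in>{a\<in>V. P a}. mu a) = card {l\<in>I. P (alpha l)}" for P
  proof -
    have "{l\<in>I. P (alpha l)} = (\<Union>a\<in>{a\<in>V. P a}. {l\<in>I. alpha l = a})" unfolding V_def by auto
    hence "card {l\<in>I. P (alpha l)} = (\<Sum>a\<in>{a\<in>V. P a}. card {l\<in>I. alpha l = a})"
      using fI fV by (simp only:) (rule card_UN_disjoint, auto)
    thus ?thesis unfolding mu_def by simp
  qed
  have cI: "card I = k" unfolding I_def by simp
  have musum_all: "(\<Sum>a\<in>V. mu a) = k" using musum[of "\<lambda>_. True"] cI by simp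
  have p1: "(\<Prod>l\<in>I. [:alpha l, -1:]) = g * (\<Prod>a\<in>V. [:a, -1:])"
  proof -
    have "(\<Prod>l\<in>I. [:alpha l, -1:]) = (\<Prod>a\<in>V. \<Prod>l\<in>{x. x \<in> I \<and> alpha x = a}. [:alpha l, -1:])"
      unfolding V_def by (rule prod.image_gen[OF fI])
    also have "\<dots> = (\<Prod>a\<in>V. [:a, -1:] ^ mu a)"
      by (rule prod.cong) (auto simp: mu_def)
    also have "\<dots> = (\<Prod>a\<in>V. [:a, -1:] ^ (mu a - 1) * [:a, -1:])"
    proof (rule prod.cong[OF refl])
      fix a assume "a \<in> V"
      hence "mu a = Suc (mu a - 1)" using mu1[of a] by linarith
      thus "[:a, -1:] ^ mu a = [:a, -1:] ^ (mu a - 1) * [:a, -1:]"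
        by (metis power_Suc2)
    qed
    also have "\<dots> = g * (\<Prod>a\<in>V. [:a, -1:])" unfolding g_def by (rule prod.distrib)
    finally show ?thesis .
  qed
  have p2: "(\<Prod>l\<in>I - {m}. [:alpha l, -1:]) = g * (\<Prod>b\<in>V - {alpha m}. [:b, -1:])" if m: "m \<in> I" for m
  proof -
    have am: "alpha m \<in> V" using m unfolding V_def by auto
    have "[:alpha m, -1:] * (\<Prod>l\<in>I - {m}. [:alpha l, -1:]) = (\<Prod>l\<in>I. [:alpha l, -1:])"
      using prod.remove[OF fI m, of "\<lambda>l. [:alpha l, -1:]"] by simp
    also have "\<dots> = g * ([:alpha m, -1:] * (\<Prod>b\<in>V - {alpha m}. [:b, -1:]))"
      unfolding p1 using prod.remove[OF fV am, of "\<lambda>b. [:b, -1:]"] by simp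
    also have "\<dots> = [:alpha m, -1:] * (g * (\<Prod>b\<in>V - {alpha m}. [:b, -1:]))" by (simp only: ac_simps)
    finally show ?thesis by (subst (asm) mult_left_cancel) auto
  qed
  have p3: "(\<Sum>m\<in>I. \<Prod>l\<in>I - {m}. [:alpha l, -1:]) = g * (\<Sum>a\<in>V. smult (real (mu a)) (\<Prod>b\<in>V - {a}. [:b, -1:]))"
  proof -
    have "(\<Sum>m\<in>I. \<Prod>l\<in>I - {m}. [:alpha l, -1:]) = (\<Sum>m\<in>I. g * (\<Prod>b\<in>V - {alpha m}. [:b, -1:]))"
      by (rule sum.cong) (auto simp: p2)
    also have "\<dots> = (\<Sum>a\<in>V. \<Sum>m\<in>{x. x \<in> I \<and> alpha x = a}. g * (\<Prod>b\<in>V - {alpha m}. [:b, -1:]))"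
      unfolding V_def by (rule sum.image_gen[OF fI])
    also have "\<dots> = (\<Sum>a\<in>V. of_nat (mu a) * (g * (\<Prod>b\<in>V - {a}. [:b, -1:])))"
      by (rule sum.cong) (auto simp: mu_def)
    also have "\<dots> = g * (\<Sum>a\<in>V. smult (real (mu a)) (\<Prod>b\<in>V - {a}. [:b, -1:]))"
      by (simp add: sum_distrib_left of_nat_mult_poly)
    finally show ?thesis .
  qed
  have dge: "d = g * e"
    unfolding d_def dpoly_def e_def Eform_def I_def[symmetric] p1 p3 by (simp add: algebra_simps)
  have sumw: "(\<Sum>a\<in>V. real (mu a)) = real k" using musum_all by (metis of_nat_sum)
  have dege: "degree e = s" unfolding e_def s_def
    by (rule Eform_degree_eq) (use fV s1 k2 sumw s_def in auto)
  have lce: "lead_coeff e = (-1) ^ s * (1 - real k)"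
    using Eform_deg[OF fV, of id "\<lambda>a. real (mu a)"] s1 dege sumw unfolding e_def s_def by simp
  have e0: "e \<noteq> 0" using dege s1 by auto
  have pe: "poly e a = a * real (mu a) * (\<Prod>b\<in>V - {a}. b - a)" if a: "a \<in> V" for a
  proof -
    have z1: "(\<Prod>l\<in>V. l - a) = 0" using a fV by (simp add: prod_zero_iff)
    have "(\<Sum>m\<in>V. real (mu m) * (\<Prod>l\<in>V - {m}. l - a)) = real (mu a) * (\<Prod>l\<in>V - {a}. l - a) + (\<Sum>m\<in>V - {a}. real (mu m) * (\<Prod>l\<in>V - {m}. l - a))"
      by (rule sum.remove[OF fV a])
    also have "(\<Sum>m\<in>V - {a}. real (mu m) * (\<Prod>l\<in>V - {m}. l - a)) = 0"
      by (rule sum.neutral) (use fV a in \<open>auto simp: prod_zero_iff\<close>)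
    finally show ?thesis unfolding e_def poly_Eform using z1 by simp
  qed
  have sg: "0 < poly e a * (-1) ^ card {b\<in>V. b < a}" if a: "a \<in> V" for a
  proof -
    define L where "L = {b\<in>V. b < a}"
    define U where "U = {b\<in>V. a < b}"
    have fL: "finite L" and fU: "finite U" using fV unfolding L_def U_def by auto
    have VLU: "V - {a} = L \<union> U" unfolding L_def U_def by auto
    have "(\<Prod>b\<in>V - {a}. b - a) = (\<Prod>b\<in>L. b - a) * (\<Prod>b\<in>U. b - a)"
      unfolding VLU by (rule prod.union_disjoint) (use fL fU in \<open>auto simp: L_def U_def\<close>)
    also have "(\<Prod>b\<in>L. b - a) = (\<Prod>b\<in>L. (-1) * (a - b))" by (rule prod.cong) auto
    also have "\<dots> = (\<Prod>b\<in>L. -1) * (\<Prod>b\<in>L. a - b)" by (rule prod.distrib)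
    also have "\<dots> = (-1) ^ card L * (\<Prod>b\<in>L. a - b)" by simp
    finally have eq: "(\<Prod>b\<in>V - {a}. b - a) = (-1) ^ card L * (\<Prod>b\<in>L. a - b) * (\<Prod>b\<in>U. b - a)" .
    have pL: "0 < (\<Prod>b\<in>L. a - b)" by (rule prod_pos) (auto simp: L_def)
    have pU: "0 < (\<Prod>b\<in>U. b - a)" by (rule prod_pos) (auto simp: U_def)
    have "poly e a * (-1) ^ card L = a * real (mu a) * ((-1) ^ card L * (-1) ^ card L) * (\<Prod>b\<in>L. a - b) * (\<Prod>b\<in>U. b - a)"
      unfolding pe[OF a] eq by (simp add: algebra_simps)
    also have "\<dots> = a * real (mu a) * (\<Prod>b\<in>L. a - b) * (\<Prod>b\<in>U. b - a)" by (simp add: neg_one_sq)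
    also have "\<dots> > 0" using Vpos[OF a] mu1[OF a] pL pU by (simp add: mult_pos_pos)
    finally show ?thesis unfolding L_def .
  qed
  have pe0: "poly e 0 > 0"
  proof -
    have "poly e 0 = (\<Prod>l\<in>V. l)" unfolding e_def poly_Eform by simp
    also have "\<dots> > 0" by (rule prod_pos) (use Vpos in auto)
    finally show ?thesis .
  qed
  have eneg: "\<exists>t<0. poly e t < 0"
  proof -
    define q where "q = - pcompose e [:0, -1:]"
    have "lead_coeff (pcompose e [:0, -1:]) = lead_coeff e * lead_coeff [:0, -1::real:] ^ degree e"
      by (rule lead_coeff_comp) simp
    also have "\<dots> = (1 - real k) * ((-1) ^ s * (-1) ^ s)" unfolding dege using lce[unfolded dege] by (simp add: ac_simps)
    also have "\<dots> = (1 - real k)" by (simp add: neg_one_sq)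
    finally have "lead_coeff q = real k - 1" unfolding q_def by simp
    hence lq: "lead_coeff q > 0" using k2 by simp
    obtain n where n: "\<forall>x\<ge>n. poly q x \<ge> lead_coeff q" using poly_pinfty_gt_lc[OF lq] by blast
    define x where "x = max n 1"
    have "poly q x \<ge> lead_coeff q" using n x_def by simp
    hence "poly e (- x) < 0" using lq unfolding q_def by (simp add: poly_pcompose)
    moreover have "- x < 0" unfolding x_def by simp
    ultimately show ?thesis by blast
  qed
  define M where "M = Max V"
  have MV: "M \<in> V" unfolding M_def using fV Vne by simp
  have leM: "b \<le> M" if "b \<in> V" for b unfolding M_def using fV that by simp
  define nxt where "nxt = (\<lambda>a. Min {b\<in>V. a < b})"
  have nxt: "nxt a \<in> V \<and> a < nxt a \<and> (\<forall>b\<in>V. a < b \<longrightarrow> nxt a \<le> b)" if a: "a \<in> V - {M}" for a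
  proof -
    have ne: "{b\<in>V. a < b} \<noteq> {}" using a leM[of a] MV by (auto intro!: exI[of _ M] simp: order.order_iff_strict)
    have fin: "finite {b\<in>V. a < b}" using fV by simp
    have "nxt a \<in> {b\<in>V. a < b}" unfolding nxt_def using Min_in[OF fin ne] .
    moreover have "\<forall>b\<in>V. a < b \<longrightarrow> nxt a \<le> b" unfolding nxt_def using fin by simp
    ultimately show ?thesis by simp
  qed
  have gap: "\<exists>x. a < x \<and> x < nxt a \<and> poly e x = 0" if a: "a \<in> V - {M}" for a
  proof -
    have aV: "a \<in> V" using a by simp
    have n1: "nxt a \<in> V" and n2: "a < nxt a" and n3: "\<forall>b\<in>V. a < b \<longrightarrow> nxt a \<le> b" using nxt[OF a] by auto
    have "{b\<in>V. b < nxt a} = insert a {b\<in>V. b < a}" using n2 n3 aV by force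
    hence cn: "card {b\<in>V. b < nxt a} = Suc (card {b\<in>V. b < a})" using fV by simp
    define c where "c = card {b\<in>V. b < a}"
    have A: "0 < poly e a * (-1) ^ c" using sg[OF aV] c_def by simp
    have B: "0 < poly e (nxt a) * (-1) ^ Suc c" using sg[OF n1] cn c_def by simp
    have "0 < (poly e a * (-1) ^ c) * (poly e (nxt a) * (-1) ^ Suc c)" by (rule mult_pos_pos[OF A B])
    also have "(poly e a * (-1) ^ c) * (poly e (nxt a) * (-1) ^ Suc c) = - (poly e a * poly e (nxt a)) * ((-1) ^ c * (-1) ^ c)"
      by (simp add: algebra_simps)
    also have "\<dots> = - (poly e a * poly e (nxt a))" by (simp add: neg_one_sq)
    finally have "poly e a * poly e (nxt a) < 0" by simp
    from poly_IVT[OF n2 this] show ?thesis by blast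
  qed
  have "\<forall>a\<in>V - {M}. \<exists>x. a < x \<and> x < nxt a \<and> poly e x = 0" using gap by blast
  from bchoice[OF this] obtain rho where rho: "\<forall>a\<in>V - {M}. a < rho a \<and> rho a < nxt a \<and> poly e (rho a) = 0"
    by blast
  obtain t where t: "t < 0" "poly e t < 0" using eneg by blast
  obtain rho0 where rho0: "t < rho0" "rho0 < 0" "poly e rho0 = 0" using poly_IVT_pos[OF t(1) t(2) pe0] by blast
  define Z where "Z = {x. poly e x = 0}"
  define Z' where "Z' = insert rho0 (rho ` (V - {M}))"
  have fZ: "finite Z" unfolding Z_def using e0 by (rule poly_roots_finite)
  have cZ: "card Z \<le> s" unfolding Z_def dege[symmetric] by (rule card_poly_roots_bound[OF e0])
  have Z'Z: "Z' \<subseteq> Z" unfolding Z'_def Z_def using rho rho0 by auto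
  have rho_mono: "rho a < rho b" if "a \<in> V - {M}" "b \<in> V - {M}" "a < b" for a b
  proof -
    have "rho a < nxt a" using rho that by auto
    also have "nxt a \<le> b" using nxt[OF that(1)] that by auto
    also have "b < rho b" using rho that by auto
    finally show ?thesis .
  qed
  have inj: "inj_on rho (V - {M})"
  proof (rule inj_onI)
    fix a b assume ab: "a \<in> V - {M}" "b \<in> V - {M}" "rho a = rho b"
    show "a = b"
    proof (rule ccontr)
      assume "a \<noteq> b"
      hence "a < b \<or> b < a" by auto
      thus False using rho_mono[OF ab(1,2)] rho_mono[OF ab(2,1)] ab(3) by auto
    qed
  qed
  have rho_pos: "rho a > 0" if "a \<in> V - {M}" for a using rho that Vpos[of a] by force
  have notin: "rho0 \<notin> rho ` (V - {M})" using rho_pos rho0(2) by force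
  have cZ': "card Z' = s"
  proof -
    have "card Z' = Suc (card (rho ` (V - {M})))" unfolding Z'_def using notin fV by simp
    also have "card (rho ` (V - {M})) = card (V - {M})" using card_image[OF inj] .
    also have "card (V - {M}) = s - 1" using MV fV s_def by simp
    finally show ?thesis using s1 by simp
  qed
  have ZZ: "Z = Z'"
    using card_subset_eq[OF fZ Z'Z] cZ cZ' card_mono[OF fZ Z'Z] by simp
  have eZ: "e = smult (lead_coeff e) (\<Prod>z\<in>Z. [:- z, 1:])"
    by (rule split_roots[OF e0 fZ]) (use cZ cZ' card_mono[OF fZ Z'Z] dege Z_def in auto)
  have Zcount: "{z\<in>Z. P z} = insert rho0 (rho ` {a\<in>V. a < tt})"
    if tt: "tt \<in> V" and P: "P = (\<lambda>x. x \<le> tt) \<or> P = (\<lambda>x. x < tt)" for P tt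
  proof -
    have Pl: "P x \<Longrightarrow> x \<le> tt" for x using P by auto
    have Pr: "x < tt \<Longrightarrow> P x" for x using P by auto
    have t0: "0 < tt" using Vpos[OF tt] .
    show ?thesis
    proof (rule equalityI; rule subsetI)
      fix z assume z: "z \<in> {z\<in>Z. P z}"
      hence "z \<in> Z'" "P z" using ZZ by auto
      then consider "z = rho0" | a where "a \<in> V - {M}" "z = rho a" unfolding Z'_def by auto
      thus "z \<in> insert rho0 (rho ` {a\<in>V. a < tt})"
      proof cases
        case 1 then show ?thesis by simp
      next
        case (2 a)
        have "a < rho a" using rho 2 by auto
        also have "rho a \<le> tt" using Pl \<open>P z\<close> 2 by simp
        finally show ?thesis using 2 by auto
      qed
    next
      fix z assume z: "z \<in> insert rho0 (rho ` {a\<in>V. a < tt})"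
      then consider "z = rho0" | a where "a \<in> V" "a < tt" "z = rho a" by auto
      thus "z \<in> {z\<in>Z. P z}"
      proof cases
        case 1 then show ?thesis using rho0 Pr t0 Z_def by auto
      next
        case (2 a)
        have aM: "a \<in> V - {M}" using 2 leM[OF tt] by auto
        have "rho a < nxt a" using rho aM by auto
        also have "nxt a \<le> tt" using nxt[OF aM] 2 tt by auto
        finally have "P z" using Pr 2 by simp
        moreover have "z \<in> Z" using ZZ aM 2 unfolding Z'_def by auto
        ultimately show ?thesis by simp
      qed
    qed
  qed
  have Zcard: "card {z\<in>Z. P z} = Suc (card {a\<in>V. a < tt})"
    if tt: "tt \<in> V" and P: "P = (\<lambda>x. x \<le> tt) \<or> P = (\<lambda>x. x < tt)" for P tt
  proof -
    have sub: "{a\<in>V. a < tt} \<subseteq> V - {M}" using leM[OF tt] by auto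
    have "rho0 \<notin> rho ` {a\<in>V. a < tt}" using notin sub by auto
    hence "card (insert rho0 (rho ` {a\<in>V. a < tt})) = Suc (card (rho ` {a\<in>V. a < tt}))"
      using fV by simp
    also have "card (rho ` {a\<in>V. a < tt}) = card {a\<in>V. a < tt}"
      by (rule card_image[OF inj_on_subset[OF inj sub]])
    finally show ?thesis using Zcount[OF tt P] by simp
  qed
  define R where "R = mset_set Z + (\<Sum>a\<in>V. replicate_mset (mu a - 1) a)"
  have sizeP: "size (filter_mset P R) + card {a\<in>V. P a} = card {z\<in>Z. P z} + card {l\<in>I. P (alpha l)}" for P
  proof -
    have "size (filter_mset P R) = card {z\<in>Z. P z} + (\<Sum>a\<in>{a\<in>V. P a}. mu a - 1)"
      unfolding R_def using conjunct1[OF rep_sum_lemmas[OF fV, of P "\<lambda>a. mu a - 1" "\<lambda>x. x"]] fZ by simp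
    moreover have "(\<Sum>a\<in>{a\<in>V. P a}. mu a - 1) + card {a\<in>V. P a} = (\<Sum>a\<in>{a\<in>V. P a}. mu a)"
    proof -
      have "(\<Sum>a\<in>{a\<in>V. P a}. mu a - 1) + card {a\<in>V. P a} = (\<Sum>a\<in>{a\<in>V. P a}. mu a - 1 + 1)"
        by (simp only: sum.distrib card_eq_sum)
      also have "\<dots> = (\<Sum>a\<in>{a\<in>V. P a}. mu a)" by (rule sum.cong[OF refl]) (metis (mono_tags, lifting) mem_Collect_eq mu1 le_add_diff_inverse2)
      finally show ?thesis .
    qed
    ultimately show ?thesis using musum[of P] by simp
  qed
  have sizeR: "size R = k"
    using sizeP[of "\<lambda>_. True"] cI ZZ cZ' s_def by simp
  define xs where "xs = sorted_list_of_multiset R"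
  define r where "r = (\<lambda>j. xs ! (j - 1))"
  have lxs: "length xs = k" unfolding xs_def using sizeR by (metis mset_sorted_list_of_multiset size_mset)
  have sxs: "sorted xs" unfolding xs_def by simp
  have lf: "length (filter P xs) = size (filter_mset P R)" for P
    unfolding xs_def by (metis mset_filter mset_sorted_list_of_multiset size_mset)
  have cntle: "length (filter (\<lambda>x. x \<le> alpha j) xs) \<ge> j" if j: "j \<in> I" for j
  proof -
    define tt where "tt = alpha j"
    have tt: "tt \<in> V" unfolding tt_def V_def using j by auto
    have "{a\<in>V. a \<le> tt} = insert tt {a\<in>V. a < tt}" using tt by auto
    hence c1: "card {a\<in>V. a \<le> tt} = Suc (card {a\<in>V. a < tt})" using fV by simp
    have c2: "card {z\<in>Z. z \<le> tt} = Suc (card {a\<in>V. a < tt})" using Zcard[OF tt, of "\<lambda>x. x \<le> tt"] by simp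
    have "size (filter_mset (\<lambda>x. x \<le> tt) R) = card {l\<in>I. alpha l \<le> tt}"
      using sizeP[of "\<lambda>x. x \<le> tt"] c1 c2 by simp
    moreover have "{1..j} \<subseteq> {l\<in>I. alpha l \<le> tt}" using j mono unfolding I_def tt_def by auto
    hence "card {1..j} \<le> card {l\<in>I. alpha l \<le> tt}" by (rule card_mono[rotated]) (use fI in simp)
    ultimately show ?thesis using lf[of "\<lambda>x. x \<le> tt"] tt_def by simp
  qed
  have cntlt: "length (filter (\<lambda>x. x < alpha (j - 1)) xs) \<le> j - 1" if j: "j \<in> {2..k}" for j
  proof -
    define tt where "tt = alpha (j - 1)"
    have tt: "tt \<in> V" unfolding tt_def V_def I_def using j by (intro imageI) auto
    have c2: "card {z\<in>Z. z < tt} = Suc (card {a\<in>V. a < tt})" using Zcard[OF tt, of "\<lambda>x. x < tt"] by simp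
    have eq: "size (filter_mset (\<lambda>x. x < tt) R) = Suc (card {l\<in>I. alpha l < tt})"
      using sizeP[of "\<lambda>x. x < tt"] c2 by simp
    have "{l\<in>I. alpha l < tt} \<subseteq> {1..j - 2}"
    proof
      fix l assume l: "l \<in> {l\<in>I. alpha l < tt}"
      have "\<not> j - 1 \<le> l"
      proof
        assume "j - 1 \<le> l"
        hence "alpha (j - 1) \<le> alpha l" using mono l j unfolding I_def by auto
        thus False using l tt_def by simp
      qed
      thus "l \<in> {1..j - 2}" using l unfolding I_def by auto
    qed
    hence "card {l\<in>I. alpha l < tt} \<le> card {1..j - 2}" by (rule card_mono[rotated]) simp
    hence "card {l\<in>I. alpha l < tt} \<le> j - 2" by simp
    thus ?thesis using eq lf[of "\<lambda>x. x < tt"] j tt_def by (simp, arith)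
  qed
  have cntneg: "length (filter (\<lambda>x. x < 0) xs) \<ge> 1"
  proof -
    have ve: "{a\<in>V. a < 0} = {}" using Vpos by force
    have "size (filter_mset (\<lambda>x. x < 0) R) \<ge> card {z\<in>Z. z < 0}"
      using sizeP[of "\<lambda>x. x < 0", unfolded ve] by simp
    moreover have "rho0 \<in> {z\<in>Z. z < 0}" using rho0 Z_def by simp
    hence "card {z\<in>Z. z < 0} > 0" using fZ by (subst card_gt_0_iff) auto
    hence "card {z\<in>Z. z < 0} \<ge> 1" by simp
    ultimately show ?thesis using lf by simp
  qed
  have prodR: "(\<Prod>j\<in>{1..k}. c - r j) = (\<Prod>z\<in>Z. c - z) * (\<Prod>a\<in>V. (c - a) ^ (mu a - 1))" for c
  proof -
    have "(\<Prod>j\<in>{1..k}. c - r j) = (\<Prod>i<k. c - r (Suc i))" using prod.atLeast1_atMost_eq[of "\<lambda>j. c - r j" k] by simp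
    also have "\<dots> = (\<Prod>i\<in>{0..<length (map (\<lambda>x. c - x) xs)}. map (\<lambda>x. c - x) xs ! i)"
      using lxs by (intro prod.cong) (auto simp: r_def)
    also have "\<dots> = prod_list (map (\<lambda>x. c - x) xs)" by (rule prod.list_conv_set_nth[symmetric])
    also have "\<dots> = prod_mset (image_mset (\<lambda>x. c - x) R)"
      unfolding xs_def by (metis mset_map mset_sorted_list_of_multiset prod_mset_prod_list)
    also have "\<dots> = prod_mset (image_mset (\<lambda>x. c - x) (mset_set Z)) * prod_mset (image_mset (\<lambda>x. c - x) (\<Sum>a\<in>V. replicate_mset (mu a - 1) a))"
      unfolding R_def image_mset_union prod_mset.union ..
    also have "prod_mset (image_mset (\<lambda>x. c - x) (mset_set Z)) = (\<Prod>z\<in>Z. c - z)"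
      by (rule prod_unfold_prod_mset[symmetric])
    also have "prod_mset (image_mset (\<lambda>x. c - x) (\<Sum>a\<in>V. replicate_mset (mu a - 1) a)) = (\<Prod>a\<in>V. (c - a) ^ (mu a - 1))"
      using conjunct2[OF rep_sum_lemmas[OF fV, of "\<lambda>_. True" "\<lambda>a. mu a - 1" "\<lambda>x. c - x"]] .
    finally show ?thesis .
  qed
  define N where "N = (\<Sum>a\<in>V. mu a - 1)"
  have pg: "poly g c = (-1) ^ N * (\<Prod>a\<in>V. (c - a) ^ (mu a - 1))" for c
  proof -
    have "poly g c = (\<Prod>a\<in>V. (a - c) ^ (mu a - 1))" unfolding g_def by (simp add: poly_prod)
    also have "\<dots> = (\<Prod>a\<in>V. (-1) ^ (mu a - 1) * (c - a) ^ (mu a - 1))"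
    proof (rule prod.cong[OF refl])
      fix a
      have "a - c = (-1) * (c - a)" by simp
      thus "(a - c) ^ (mu a - 1) = (-1) ^ (mu a - 1) * (c - a) ^ (mu a - 1)"
        by (metis power_mult_distrib)
    qed
    also have "\<dots> = (\<Prod>a\<in>V. (-1) ^ (mu a - 1)) * (\<Prod>a\<in>V. (c - a) ^ (mu a - 1))" by (rule prod.distrib)
    also have "(\<Prod>a\<in>V. (-1::real) ^ (mu a - 1)) = (-1) ^ N" unfolding N_def by (rule power_sum[symmetric])
    finally show ?thesis .
  qed
  define L0 where "L0 = (-1) ^ N * lead_coeff e"
  have pd: "poly d c = L0 * (\<Prod>j\<in>{1..k}. c - r j)" for c
  proof -
    have pec: "poly e c = lead_coeff e * (\<Prod>z\<in>Z. c - z)"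
      by (subst eZ) (simp add: poly_prod)
    show ?thesis unfolding dge poly_mult pec pg prodR L0_def by (simp add: ac_simps)
  qed
  have dfac: "d = smult L0 (\<Prod>j\<in>{1..k}. [:- r j, 1:])"
  proof -
    have "poly d = poly (smult L0 (\<Prod>j\<in>{1..k}. [:- r j, 1:]))"
      by (rule ext) (simp add: pd poly_prod)
    thus ?thesis by (simp add: poly_eq_poly_eq_iff)
  qed
  have "lead_coeff d = L0 * lead_coeff (\<Prod>j\<in>{1..k}. [:- r j, 1:])" unfolding dfac by (rule lead_coeff_smult)
  also have "lead_coeff (\<Prod>j\<in>{1..k}. [:- r j, 1::real:]) = 1" by (simp add: lead_coeff_prod)
  finally have lcd: "lead_coeff d = L0" by simp
  have F1: "dpoly alpha k = smult (lead_coeff (dpoly alpha k)) (\<Prod>j\<in>{1..k}. [:- r j, 1:])"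
  proof -
    have "d = smult (lead_coeff d) (\<Prod>j\<in>{1..k}. [:- r j, 1:])" unfolding lcd by (rule dfac)
    thus ?thesis unfolding d_def .
  qed
  have F2: "\<forall>i j. 1 \<le> i \<longrightarrow> i \<le> j \<longrightarrow> j \<le> k \<longrightarrow> r i \<le> r j"
    unfolding r_def using sxs lxs by (auto intro!: sorted_nth_mono)
  have F3: "r 1 < 0"
    using sorted_filter_ge[OF sxs, of 0 "\<lambda>x. x < 0"] lxs k2 cntneg unfolding r_def by simp
  have F4: "\<forall>j\<in>{2..k}. alpha (j - 1) \<le> r j \<and> r j \<le> alpha j"
  proof
    fix j assume j: "j \<in> {2..k}"
    have jI: "j \<in> I" using j unfolding I_def by auto
    have jk: "j - 1 < length xs" using j lxs by auto
    have "xs ! (j - 1) \<le> alpha j"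
      using sorted_filter_ge[OF sxs, of "j - 1" "\<lambda>x. x \<le> alpha j"] jk j cntle[OF jI] by simp
    moreover have "\<not> xs ! (j - 1) < alpha (j - 1)"
      using sorted_filter_le[OF sxs, of "j - 1" "\<lambda>x. x < alpha (j - 1)"] jk j cntlt[OF j] by simp
    ultimately show "alpha (j - 1) \<le> r j \<and> r j \<le> alpha j" unfolding r_def by simp
  qed
  show ?thesis using F1 F2 F3 F4 by blast
qed



lemma poly_dpoly_Suc:
  "poly (dpoly alpha (Suc k)) c = (alpha (Suc k) - c) * poly (dpoly alpha k) c + c * (\<Prod>l\<in>{1..k}. alpha l - c)"
  unfolding poly_dpoly using Fv_Suc[of k alpha c] by simp

lemma poly_dpoly_0: "poly (dpoly alpha k) 0 = (\<Prod>l\<in>{1..k}. alpha l)"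
  unfolding poly_dpoly Fv_def by simp

lemma poly_dpoly_2: "poly (dpoly alpha 2) c = alpha 1 * alpha 2 - c ^ 2"
proof -
  have A: "Fv {1..1} alpha c = alpha 1" using Fv_Suc[of 0 alpha c] by simp
  have B: "Fv {1..2} alpha c = (alpha 2 - c) * Fv {1..1} alpha c + c * (alpha 1 - c)"
    using Fv_Suc[of 1 alpha c] by (simp add: numeral_2_eq_2)
  show ?thesis unfolding poly_dpoly B A by (simp add: power2_eq_square algebra_simps)
qed

theorem lemma1:
  fixes p :: nat and alpha :: "nat \<Rightarrow> real"
  assumes "p \<ge> 2"
  shows "(\<forall>k\<in>{1..p}. \<forall>c. lead_minor k (Bmat p alpha c) = poly (dpoly alpha k) c)
    \<and> (\<forall>k\<in>{2..p}. degree (dpoly alpha k) = k)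
    \<and> ((0 < alpha 1 \<and> (\<forall>i j. 1 \<le> i \<longrightarrow> i \<le> j \<longrightarrow> j \<le> p \<longrightarrow> alpha i \<le> alpha j)
          \<and> alpha p < 1) \<longrightarrow>
       (\<exists>r :: nat \<Rightarrow> nat \<Rightarrow> real.
          (\<forall>k\<in>{2..p}.
             (\<forall>z. poly (map_poly complex_of_real (dpoly alpha k)) z = 0 \<longrightarrow> z \<in> \<real>)
           \<and> dpoly alpha k = smult (lead_coeff (dpoly alpha k)) (\<Prod>j\<in>{1..k}. [:- r k j, 1:])
           \<and> (\<forall>i j. 1 \<le> i \<longrightarrow> i \<le> j \<longrightarrow> j \<le> k \<longrightarrow> r k i \<le> r k j)
           \<and> r k 1 < 0 \<and> 0 < alpha 1
           \<and> (\<forall>j\<in>{2..k}. alpha (j - 1) \<le> r k j \<and> r k j \<le> alpha j)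
           \<and> alpha k < 1
           \<and> 0 < r k 2)
        \<and> r 2 1 = - sqrt (alpha 1 * alpha 2)
        \<and> r 2 2 = sqrt (alpha 1 * alpha 2)
        \<and> (\<forall>k\<in>{2..<p}. r k 1 \<le> r (k + 1) 1 \<and> r (k + 1) 2 \<le> r k 2)))"
proof -
  have P1: "\<forall>k\<in>{1..p}. \<forall>c. lead_minor k (Bmat p alpha c) = poly (dpoly alpha k) c"
    using part1 by auto
  have P2: "\<forall>k\<in>{2..p}. degree (dpoly alpha k) = k" using part2 by auto
  have P3: "(0 < alpha 1 \<and> (\<forall>i j. 1 \<le> i \<longrightarrow> i \<le> j \<longrightarrow> j \<le> p \<longrightarrow> alpha i \<le> alpha j)
          \<and> alpha p < 1) \<longrightarrow>
       (\<exists>r :: nat \<Rightarrow> nat \<Rightarrow> real.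
          (\<forall>k\<in>{2..p}.
             (\<forall>z. poly (map_poly complex_of_real (dpoly alpha k)) z = 0 \<longrightarrow> z \<in> \<real>)
           \<and> dpoly alpha k = smult (lead_coeff (dpoly alpha k)) (\<Prod>j\<in>{1..k}. [:- r k j, 1:])
           \<and> (\<forall>i j. 1 \<le> i \<longrightarrow> i \<le> j \<longrightarrow> j \<le> k \<longrightarrow> r k i \<le> r k j)
           \<and> r k 1 < 0 \<and> 0 < alpha 1
           \<and> (\<forall>j\<in>{2..k}. alpha (j - 1) \<le> r k j \<and> r k j \<le> alpha j)
           \<and> alpha k < 1
           \<and> 0 < r k 2)
        \<and> r 2 1 = - sqrt (alpha 1 * alpha 2)
        \<and> r 2 2 = sqrt (alpha 1 * alpha 2)
        \<and> (\<forall>k\<in>{2..<p}. r k 1 \<le> r (k + 1) 1 \<and> r (k + 1) 2 \<le> r k 2))"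
  proof
    assume H: "0 < alpha 1 \<and> (\<forall>i j. 1 \<le> i \<longrightarrow> i \<le> j \<longrightarrow> j \<le> p \<longrightarrow> alpha i \<le> alpha j) \<and> alpha p < 1"
    have a1: "0 < alpha 1" and mono: "\<forall>i j. 1 \<le> i \<longrightarrow> i \<le> j \<longrightarrow> j \<le> p \<longrightarrow> alpha i \<le> alpha j"
      and ap: "alpha p < 1" using H by auto
    have "\<forall>k\<in>{2..p}. \<exists>r. dpoly alpha k = smult (lead_coeff (dpoly alpha k)) (\<Prod>j\<in>{1..k}. [:- r j, 1:])
     \<and> (\<forall>i j. 1 \<le> i \<longrightarrow> i \<le> j \<longrightarrow> j \<le> k \<longrightarrow> r i \<le> r j)
     \<and> r 1 < 0 \<and> (\<forall>j\<in>{2..k}. alpha (j - 1) \<le> r j \<and> r j \<le> alpha j)"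
    proof
      fix k assume k: "k \<in> {2..p}"
      show "\<exists>r. dpoly alpha k = smult (lead_coeff (dpoly alpha k)) (\<Prod>j\<in>{1..k}. [:- r j, 1:])
     \<and> (\<forall>i j. 1 \<le> i \<longrightarrow> i \<le> j \<longrightarrow> j \<le> k \<longrightarrow> r i \<le> r j)
     \<and> r 1 < 0 \<and> (\<forall>j\<in>{2..k}. alpha (j - 1) \<le> r j \<and> r j \<le> alpha j)"
        by (rule roots_struct) (use k a1 mono in auto)
    qed
    from bchoice[OF this] obtain r where r: "\<forall>k\<in>{2..p}. dpoly alpha k = smult (lead_coeff (dpoly alpha k)) (\<Prod>j\<in>{1..k}. [:- r k j, 1:])
     \<and> (\<forall>i j. 1 \<le> i \<longrightarrow> i \<le> j \<longrightarrow> j \<le> k \<longrightarrow> r k i \<le> r k j)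
     \<and> r k 1 < 0 \<and> (\<forall>j\<in>{2..k}. alpha (j - 1) \<le> r k j \<and> r k j \<le> alpha j)" by blast
    have fac: "dpoly alpha k = smult (lead_coeff (dpoly alpha k)) (\<Prod>j\<in>{1..k}. [:- r k j, 1:])"
      and srt: "\<And>i j. 1 \<le> i \<Longrightarrow> i \<le> j \<Longrightarrow> j \<le> k \<Longrightarrow> r k i \<le> r k j"
      and neg: "r k 1 < 0"
      and il: "\<And>j. j \<in> {2..k} \<Longrightarrow> alpha (j - 1) \<le> r k j \<and> r k j \<le> alpha j"
      if "k \<in> {2..p}" for k using r that by auto
    have d0: "dpoly alpha k \<noteq> 0" if "k \<in> {2..p}" for k
      using part2[of k alpha] that by auto
    have cons: "(\<forall>x. poly (dpoly alpha k) x = 0 \<longleftrightarrow> (\<exists>j\<in>{1..k}. x = r k j))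
      \<and> (\<forall>z. poly (map_poly complex_of_real (dpoly alpha k)) z = 0 \<longrightarrow> z \<in> \<real>)" if k: "k \<in> {2..p}" for k
      by (rule fact_consequences[OF fac[OF k] d0[OF k]])
    have alpha_pos: "0 < alpha l" if "1 \<le> l" "l \<le> p" for l
      using mono that a1 by (metis order.strict_trans2 le_refl)
    have r2: "alpha 1 \<le> r k 2" if k: "k \<in> {2..p}" for k using il[OF k, of 2] k by auto
    have rootcase: "x = r k 1 \<or> r k 2 \<le> x" if k: "k \<in> {2..p}" and x: "poly (dpoly alpha k) x = 0" for k x
    proof -
      obtain j where j: "j \<in> {1..k}" "x = r k j" using cons[OF k] x by blast
      show ?thesis
      proof (cases "j = 1")
        case True then show ?thesis using j by simp
      next
        case False
        hence "r k 2 \<le> r k j" using j k by (intro srt[OF k]) auto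
        then show ?thesis using j by simp
      qed
    qed
    have main: "\<forall>k\<in>{2..p}.
             (\<forall>z. poly (map_poly complex_of_real (dpoly alpha k)) z = 0 \<longrightarrow> z \<in> \<real>)
           \<and> dpoly alpha k = smult (lead_coeff (dpoly alpha k)) (\<Prod>j\<in>{1..k}. [:- r k j, 1:])
           \<and> (\<forall>i j. 1 \<le> i \<longrightarrow> i \<le> j \<longrightarrow> j \<le> k \<longrightarrow> r k i \<le> r k j)
           \<and> r k 1 < 0 \<and> 0 < alpha 1
           \<and> (\<forall>j\<in>{2..k}. alpha (j - 1) \<le> r k j \<and> r k j \<le> alpha j)
           \<and> alpha k < 1
           \<and> 0 < r k 2"
    proof
      fix k assume k: "k \<in> {2..p}"
      have "alpha k \<le> alpha p" using mono k by auto
      hence "alpha k < 1" using ap by simp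
      moreover have "0 < r k 2" using r2[OF k] a1 by simp
      ultimately show "(\<forall>z. poly (map_poly complex_of_real (dpoly alpha k)) z = 0 \<longrightarrow> z \<in> \<real>)
           \<and> dpoly alpha k = smult (lead_coeff (dpoly alpha k)) (\<Prod>j\<in>{1..k}. [:- r k j, 1:])
           \<and> (\<forall>i j. 1 \<le> i \<longrightarrow> i \<le> j \<longrightarrow> j \<le> k \<longrightarrow> r k i \<le> r k j)
           \<and> r k 1 < 0 \<and> 0 < alpha 1
           \<and> (\<forall>j\<in>{2..k}. alpha (j - 1) \<le> r k j \<and> r k j \<le> alpha j)
           \<and> alpha k < 1
           \<and> 0 < r k 2"
        using cons[OF k] fac[OF k] srt[OF k] neg[OF k] a1 il[OF k] by blast
    qed
    have two: "(2::nat) \<in> {2..p}" using assms by simp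
    have a12: "0 \<le> alpha 1 * alpha 2" using alpha_pos[of 1] alpha_pos[of 2] assms by simp
    have root21: "poly (dpoly alpha 2) (r 2 1) = 0" using cons[OF two] by auto
    have root22: "poly (dpoly alpha 2) (r 2 2) = 0" using cons[OF two] by auto
    have sq21: "(r 2 1) ^ 2 = alpha 1 * alpha 2" using root21 unfolding poly_dpoly_2 by simp
    have sq22: "(r 2 2) ^ 2 = alpha 1 * alpha 2" using root22 unfolding poly_dpoly_2 by simp
    have R21: "r 2 1 = - sqrt (alpha 1 * alpha 2)"
      using neg[OF two] sq21 by (metis abs_of_neg minus_minus real_sqrt_abs)
    have R22: "r 2 2 = sqrt (alpha 1 * alpha 2)"
      using r2[OF two] a1 sq22 by (metis abs_of_pos order.strict_trans2 real_sqrt_abs)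
    have monot: "\<forall>k\<in>{2..<p}. r k 1 \<le> r (k + 1) 1 \<and> r (k + 1) 2 \<le> r k 2"
    proof
      fix k assume k': "k \<in> {2..<p}"
      have k: "k \<in> {2..p}" and k1: "Suc k \<in> {2..p}" using k' by auto
      have posP: "poly (dpoly alpha (Suc k)) 0 > 0"
        unfolding poly_dpoly_0 by (rule prod_pos) (use alpha_pos k1 in auto)
      have rec: "poly (dpoly alpha (Suc k)) (r k j) = r k j * (\<Prod>l\<in>{1..k}. alpha l - r k j)" if "j \<in> {1..k}" for j
        using cons[OF k] that unfolding poly_dpoly_Suc by auto
      have A: "r k 1 \<le> r (k + 1) 1"
      proof (rule ccontr)
        assume c: "\<not> r k 1 \<le> r (k + 1) 1"
        define y where "y = r k 1"
        have y0: "y < 0" using neg[OF k] y_def by simp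
        have "alpha l - y > 0" if "l \<in> {1..k}" for l using alpha_pos[of l] that k y0 by auto
        hence "(\<Prod>l\<in>{1..k}. alpha l - y) > 0" by (rule prod_pos)
        hence "poly (dpoly alpha (Suc k)) y < 0" using rec[of 1] k y0 y_def by (simp add: mult_neg_pos)
        from poly_IVT_pos[OF y0 this posP] obtain x where x: "y < x" "x < 0" "poly (dpoly alpha (Suc k)) x = 0" by blast
        from rootcase[OF k1 x(3)] show False
        proof
          assume "x = r (Suc k) 1" thus False using c x y_def by simp
        next
          assume "r (Suc k) 2 \<le> x" thus False using r2[OF k1] a1 x by simp
        qed
      qed
      have B: "r (k + 1) 2 \<le> r k 2"
      proof (rule ccontr)
        assume c: "\<not> r (k + 1) 2 \<le> r k 2"
        define y where "y = r k 2"
        have yl: "alpha 1 \<le> y" and yu: "y \<le> alpha 2" using il[OF k, of 2] k y_def by auto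
        have y0: "0 < y" using yl a1 by simp
        have "{1..k} = insert 1 {2..k}" using k by auto
        hence "(\<Prod>l\<in>{1..k}. alpha l - y) = (alpha 1 - y) * (\<Prod>l\<in>{2..k}. alpha l - y)" by simp
        moreover have "alpha l - y \<ge> 0" if "l \<in> {2..k}" for l
        proof -
          have "alpha 2 \<le> alpha l" using mono that k by auto
          thus ?thesis using yu by simp
        qed
        hence "(\<Prod>l\<in>{2..k}. alpha l - y) \<ge> 0" by (rule prod_nonneg)
        ultimately have "(\<Prod>l\<in>{1..k}. alpha l - y) \<le> 0" using yl by (simp add: mult_nonpos_nonneg)
        hence py: "poly (dpoly alpha (Suc k)) y \<le> 0"
          using rec[of 2] k y0 y_def by (simp add: mult_nonneg_nonpos)
        show False
        proof (cases "poly (dpoly alpha (Suc k)) y = 0")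
          case True
          from rootcase[OF k1 True] show False
          proof
            assume "y = r (Suc k) 1" thus False using neg[OF k1] y0 by simp
          next
            assume "r (Suc k) 2 \<le> y" thus False using c y_def by simp
          qed
        next
          case False
          hence "poly (dpoly alpha (Suc k)) y < 0" using py by simp
          from poly_IVT_neg[OF y0 posP this] obtain x where x: "0 < x" "x < y" "poly (dpoly alpha (Suc k)) x = 0" by blast
          from rootcase[OF k1 x(3)] show False
          proof
            assume "x = r (Suc k) 1" thus False using neg[OF k1] x by simp
          next
            assume "r (Suc k) 2 \<le> x" thus False using c x y_def by simp
          qed
        qed
      qed
      show "r k 1 \<le> r (k + 1) 1 \<and> r (k + 1) 2 \<le> r k 2" using A B by simp
    qed
    show "\<exists>r :: nat \<Rightarrow> nat \<Rightarrow> real.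
          (\<forall>k\<in>{2..p}.
             (\<forall>z. poly (map_poly complex_of_real (dpoly alpha k)) z = 0 \<longrightarrow> z \<in> \<real>)
           \<and> dpoly alpha k = smult (lead_coeff (dpoly alpha k)) (\<Prod>j\<in>{1..k}. [:- r k j, 1:])
           \<and> (\<forall>i j. 1 \<le> i \<longrightarrow> i \<le> j \<longrightarrow> j \<le> k \<longrightarrow> r k i \<le> r k j)
           \<and> r k 1 < 0 \<and> 0 < alpha 1
           \<and> (\<forall>j\<in>{2..k}. alpha (j - 1) \<le> r k j \<and> r k j \<le> alpha j)
           \<and> alpha k < 1
           \<and> 0 < r k 2)
        \<and> r 2 1 = - sqrt (alpha 1 * alpha 2)
        \<and> r 2 2 = sqrt (alpha 1 * alpha 2)
        \<and> (\<forall>k\<in>{2..<p}. r k 1 \<le> r (k + 1) 1 \<and> r (k + 1) 2 \<le> r k 2)"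
      using main R21 R22 monot by blast
  qed
  show ?thesis using P1 P2 P3 by blast
qed


end
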